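(* Let $\mathbb{k}$ be a field of characteristic $0$, $\mathfrak{M}$ a monomial group, and $(\epsilon_i)_{i\in I}$ a summable family in $\mathbb{k}[[\mathfrak{M}]]^{\prec1}$. Let $E$ range over the finite subsets of $I$. Then the family $\big(\prod_{i\in E}\epsilon_i\big)_E$ is summable and $$\exp\Big(\sum_i\log(1+\epsilon_i)\Big)=\sum_E\prod_{i\in E}\epsilon_i.$$
   Context: A monomial group is a (multiplicatively written) totally ordered abelian group $\mathfrak{M}$ with order $\prec$. A subset is well-based if it has no infinite strictly increasing sequence. $\mathbb{k}[[\mathfrak{M}]]$ is the Hahn field of formal series $\sum f_{\mathfrak{m}}\mathfrak{m}$ with well-based support; $\mathbb{k}[[\mathfrak{M}]]^{\prec1}$ consists of the series with support in $\{\mathfrak{m}\prec1\}$. A family $(f_i)_{i\in I}$ ($I$ a set) is summable if the union of the supports is well-based and each monomial lies in only finitely many supports; its sum is coefficientwise. For $h\in\mathbb{k}[[\mathfrak{M}]]^{\prec1}$: $\exp(h)=\sum_{i\ge0}h^i/i!$ and $\log(1+h)=\sum_{j\ge1}(-1)^{j-1}h^j/j$ (these sums exist). The empty product is $1$. *)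

theory Defs
  imports Main "HOL-Library.FuncSet"
begin

text \<open>
  The (multiplicatively written) totally ordered
  abelian monomial group is represented by a type of class linordered_ab_group_add,
  written additively: monomial product = +, monomial 1 = 0, and the order
  \<prec> is <.  So m \<prec> 1 reads m < 0.  A series is a coefficient
  function from monomials to the coefficient field.
\<close>

definition well_based :: "'m::order set \<Rightarrow> bool" where
  "well_based S \<longleftrightarrow> \<not> (\<exists>f::nat \<Rightarrow> 'm. (\<forall>n. f n \<in> S) \<and> (\<forall>n. f n < f (Suc n)))"

definition hsupp :: "('m \<Rightarrow> 'k::zero) \<Rightarrow> 'm set" where
  "hsupp f = {m. f m \<noteq> 0}"

definition is_hahn :: "('m::order \<Rightarrow> 'k::zero) \<Rightarrow> bool" where
  "is_hahn f \<longleftrightarrow> well_based (hsupp f)"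

definition is_hahn_infinitesimal :: "('m::linordered_ab_group_add \<Rightarrow> 'k::zero) \<Rightarrow> bool" where
  "is_hahn_infinitesimal f \<longleftrightarrow> is_hahn f \<and> hsupp f \<subseteq> {m. m < 0}"

definition hsummable :: "('i \<Rightarrow> 'm::order \<Rightarrow> 'k::zero) \<Rightarrow> 'i set \<Rightarrow> bool" where
  "hsummable F I \<longleftrightarrow> well_based (\<Union>i\<in>I. hsupp (F i)) \<and> (\<forall>m. finite {i\<in>I. F i m \<noteq> 0})"

definition hsum :: "('i \<Rightarrow> 'm \<Rightarrow> 'k::comm_monoid_add) \<Rightarrow> 'i set \<Rightarrow> 'm \<Rightarrow> 'k" where
  "hsum F I = (\<lambda>m. \<Sum>i\<in>{i\<in>I. F i m \<noteq> 0}. F i m)"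

definition hone :: "'m::zero \<Rightarrow> 'k::{zero,one}" where
  "hone = (\<lambda>m. if m = 0 then 1 else 0)"

definition hscale :: "'k::times \<Rightarrow> ('m \<Rightarrow> 'k) \<Rightarrow> 'm \<Rightarrow> 'k" where
  "hscale c f = (\<lambda>m. c * f m)"

definition hadd :: "('m \<Rightarrow> 'k::plus) \<Rightarrow> ('m \<Rightarrow> 'k) \<Rightarrow> 'm \<Rightarrow> 'k" where
  "hadd f g = (\<lambda>m. f m + g m)"

definition hmul :: "('m::ab_group_add \<Rightarrow> 'k::comm_ring_1) \<Rightarrow> ('m \<Rightarrow> 'k) \<Rightarrow> 'm \<Rightarrow> 'k" where
  "hmul f g = (\<lambda>m. \<Sum>a\<in>{a. f a \<noteq> 0 \<and> g (m - a) \<noteq> 0}. f a * g (m - a))"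

primrec hpow :: "('m::ab_group_add \<Rightarrow> 'k::comm_ring_1) \<Rightarrow> nat \<Rightarrow> 'm \<Rightarrow> 'k" where
  "hpow f 0 = hone"
| "hpow f (Suc n) = hmul f (hpow f n)"

text \<open>Finite product \<prod>_{i\<in>E} f_i, by the multinomial coefficient formula
  (this is the iterated Cauchy product; the empty product is hone).\<close>
definition hprod :: "('i \<Rightarrow> 'm::ab_group_add \<Rightarrow> 'k::comm_ring_1) \<Rightarrow> 'i set \<Rightarrow> 'm \<Rightarrow> 'k" where
  "hprod F E = (\<lambda>m. \<Sum>a\<in>{a\<in>E \<rightarrow>\<^sub>E UNIV. (\<Sum>i\<in>E. a i) = m \<and> (\<forall>i\<in>E. F i (a i) \<noteq> 0)}.
                      \<Prod>i\<in>E. F i (a i))"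

definition hexp :: "('m::ab_group_add \<Rightarrow> 'k::field_char_0) \<Rightarrow> 'm \<Rightarrow> 'k" where
  "hexp h = hsum (\<lambda>i. hscale (1 / fact i) (hpow h i)) UNIV"

definition hlog1p :: "('m::ab_group_add \<Rightarrow> 'k::field_char_0) \<Rightarrow> 'm \<Rightarrow> 'k" where
  "hlog1p h = hsum (\<lambda>j. hscale ((-1) ^ (j - 1) / of_nat j) (hpow h j)) {1..}"

end

theory Submission
  imports Defs "HOL-Library.Poly_Mapping" "HOL-Computational_Algebra.Formal_Power_Series" "HOL-Library.Infinite_Set"
begin

lemma wb_subset: "well_based B \<Longrightarrow> A \<subseteq> B \<Longrightarrow> well_based A"
  unfolding well_based_def by blast

lemma wb_max:
  fixes S :: "'a::linorder set"
  assumes "well_based S" "X \<subseteq> S" "X \<noteq> {}"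
  shows "\<exists>x\<in>X. \<forall>y\<in>X. y \<le> x"
proof (rule ccontr)
  assume "\<not> ?thesis"
  then have "\<forall>x\<in>X. \<exists>y\<in>X. x < y" by (auto simp: not_le)
  then have "\<forall>x\<in>X. \<exists>y. y \<in> X \<and> x < y" by blast
  from bchoice[OF this] obtain nxt where nxt': "\<forall>x\<in>X. nxt x \<in> X \<and> x < nxt x" by blast
  then have nxt: "\<And>x. x \<in> X \<Longrightarrow> nxt x \<in> X \<and> x < nxt x" by blast
  obtain x0 where x0: "x0 \<in> X" using assms(3) by blast
  define f where "f n = (nxt ^^ n) x0" for n
  have fX: "f n \<in> X" for n by (induction n) (auto simp: f_def x0 nxt)
  have "f n < f (Suc n)" for n using nxt[OF fX[of n]] by (simp add: f_def)
  then have "\<exists>f. (\<forall>n. f n \<in> S) \<and> (\<forall>n. f n < f (Suc n))"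
    using assms(2) fX by (intro exI[of _ f]) blast
  then show False using assms(1) unfolding well_based_def by blast
qed

lemma wb_subseq:
  fixes S :: "'a::linorder set" and a :: "nat \<Rightarrow> 'a"
  assumes "well_based S" "\<And>k. a k \<in> S"
  shows "\<exists>\<phi>::nat\<Rightarrow>nat. strict_mono \<phi> \<and> (\<forall>i j. i \<le> j \<longrightarrow> a (\<phi> j) \<le> a (\<phi> i))"
proof -
  have ex: "\<exists>j. j0 \<le> j \<and> (\<forall>j'\<ge>j0. a j' \<le> a j)" for j0
  proof -
    obtain x where x: "x \<in> a ` {j0..}" "\<forall>y\<in>a ` {j0..}. y \<le> x"
      using wb_max[OF assms(1), of "a ` {j0..}"] assms(2) by blast
    from x(1) obtain j where j: "j0 \<le> j" "x = a j" by blast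
    have "\<forall>j'\<ge>j0. a j' \<le> a j" using x(2) j(2) by simp
    with j(1) show ?thesis by blast
  qed
  define M where "M (j0::nat) = (SOME j. j0 \<le> j \<and> (\<forall>j'\<ge>j0. a j' \<le> a j))" for j0
  have Mspec: "j0 \<le> M j0 \<and> (\<forall>j'\<ge>j0. a j' \<le> a (M j0))" for j0
    unfolding M_def by (rule someI_ex[OF ex[of j0]])
  have M1: "j0 \<le> M j0" for j0 using Mspec by blast
  have M2: "j0 \<le> j' \<Longrightarrow> a j' \<le> a (M j0)" for j0 j' using Mspec by blast
  define \<phi> where "\<phi> = rec_nat (M 0) (\<lambda>_ p. M (Suc p))"
  have \<phi>0: "\<phi> 0 = M 0" and \<phi>S: "\<phi> (Suc k) = M (Suc (\<phi> k))" for k by (simp_all add: \<phi>_def)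
  have sm': "Suc (\<phi> k) \<le> \<phi> (Suc k)" for k unfolding \<phi>S by (rule M1)
  have sm: "\<phi> k < \<phi> (Suc k)" for k using sm'[of k] by simp
  have dec: "a (\<phi> (Suc k)) \<le> a (\<phi> k)" for k
  proof (cases k)
    case 0
    have "a (\<phi> (Suc 0)) \<le> a (M 0)" by (rule M2) simp
    then show ?thesis unfolding \<open>k = 0\<close> \<phi>0 .
  next
    case (Suc k')
    have "Suc (\<phi> k') \<le> \<phi> (Suc k)" using sm'[of k'] sm[of k] Suc by simp
    then have "a (\<phi> (Suc k)) \<le> a (M (Suc (\<phi> k')))" by (rule M2)
    then show ?thesis unfolding \<open>k = Suc k'\<close> \<phi>S[of k'] .
  qed
  have "strict_mono \<phi>" unfolding strict_mono_Suc_iff using sm by (rule allI)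
  moreover have "\<forall>i j. i \<le> j \<longrightarrow> a (\<phi> j) \<le> a (\<phi> i)"
  proof (intro allI impI)
    fix i j :: nat assume "i \<le> j"
    then show "a (\<phi> j) \<le> a (\<phi> i)" by (rule lift_Suc_antimono_le[of "\<lambda>k. a (\<phi> k)", OF dec])
  qed
  ultimately show ?thesis by blast
qed

lemma minimal_bad:
  fixes Q :: "'a \<Rightarrow> bool" and Rl :: "'a \<Rightarrow> 'a \<Rightarrow> bool" and sz :: "'a \<Rightarrow> nat"
  defines "Bad \<equiv> \<lambda>g::nat \<Rightarrow> 'a. (\<forall>k. Q (g k)) \<and> (\<forall>i j. i < j \<longrightarrow> Rl (g i) (g j))"
  assumes "Bad g0"
  shows "\<exists>g. Bad g \<and> (\<forall>k h. Bad h \<and> (\<forall>i<k. h i = g i) \<longrightarrow> sz (g k) \<le> sz (h k))"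
proof -
  define P where "P xs \<longleftrightarrow> (\<exists>g. Bad g \<and> (\<forall>i<length xs. g i = xs ! i))" for xs
  define chs where "chs xs = (SOME p. P (xs @ [p]) \<and> (\<forall>q. P (xs @ [q]) \<longrightarrow> sz p \<le> sz q))" for xs
  have chs: "P (xs @ [chs xs]) \<and> (\<forall>q. P (xs @ [q]) \<longrightarrow> sz (chs xs) \<le> sz q)" if "P xs" for xs
  proof -
    from that obtain g where g: "Bad g" "\<forall>i<length xs. g i = xs ! i" unfolding P_def by blast
    have "P (xs @ [g (length xs)])" unfolding P_def
    proof (intro exI[of _ g] conjI allI impI)
      fix i assume "i < length (xs @ [g (length xs)])"
      then have "i < length xs \<or> i = length xs" by (simp add: less_Suc_eq)
      then show "g i = (xs @ [g (length xs)]) ! i"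
      proof
        assume "i < length xs" then show ?thesis using g(2) by (simp add: nth_append)
      qed (simp add: nth_append)
    qed (rule g(1))
    then have "\<exists>p. P (xs @ [p]) \<and> (\<forall>q. P (xs @ [q]) \<longrightarrow> sz p \<le> sz q)"
      using ex_has_least_nat[of "\<lambda>p. P (xs @ [p])" _ sz] by blast
    then show ?thesis unfolding chs_def by (rule someI_ex)
  qed
  define pre where "pre = rec_nat [] (\<lambda>_ xs. xs @ [chs xs])"
  have pre0: "pre 0 = []" and preS: "pre (Suc k) = pre k @ [chs (pre k)]" for k
    by (simp_all add: pre_def)
  have Ppre: "P (pre k)" for k
  proof (induction k)
    case 0 show ?case using assms(2) by (auto simp: P_def pre0)
  next
    case (Suc k) then show ?case using chs by (simp add: preS)
  qed
  define g where "g k = chs (pre k)" for k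
  have len: "length (pre k) = k" for k by (induction k) (auto simp: pre0 preS)
  have pre_eq: "pre k = map g [0..<k]" for k by (induction k) (auto simp: pre0 preS g_def)
  have wit: "\<exists>h. Bad h \<and> (\<forall>i\<le>k. h i = g i)" for k
  proof -
    from Ppre[of "Suc k"] obtain h where "Bad h" "\<forall>i<Suc k. h i = pre (Suc k) ! i"
      unfolding P_def len by auto
    moreover have "pre (Suc k) ! i = g i" if "i \<le> k" for i
      using that unfolding pre_eq by (simp del: upt_Suc)
    ultimately show ?thesis by (intro exI[of _ h]) (simp add: less_Suc_eq_le)
  qed
  have "Bad g"
    unfolding Bad_def
  proof (intro conjI allI impI)
    fix k obtain h where "Bad h" "\<forall>i\<le>k. h i = g i" using wit by blast
    then show "Q (g k)" unfolding Bad_def by (metis order_refl)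
  next
    fix i j :: nat assume "i < j"
    obtain h where "Bad h" and h: "\<forall>i'\<le>j. h i' = g i'" using wit by blast
    then have "Rl (h i) (h j)" using \<open>i < j\<close> unfolding Bad_def by blast
    moreover have "h i = g i" "h j = g j" using h \<open>i < j\<close> by auto
    ultimately show "Rl (g i) (g j)" by simp
  qed
  moreover have "sz (g k) \<le> sz (h k)" if "Bad h" "\<forall>i<k. h i = g i" for k h
  proof -
    have "P (pre k @ [h k])" unfolding P_def
    proof (intro exI[of _ h] conjI allI impI)
      fix i assume "i < length (pre k @ [h k])"
      then have "i < k \<or> i = k" by (simp add: len less_Suc_eq)
      then show "h i = (pre k @ [h k]) ! i"
      proof
        assume "i < k" then show ?thesis using that(2) by (simp add: nth_append len pre_eq)
      qed (simp add: nth_append len)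
    qed (rule that(1))
    then show ?thesis using chs[OF Ppre[of k]] by (simp add: g_def)
  qed
  ultimately show ?thesis by blast
qed

inductive rep :: "'m::monoid_add set \<Rightarrow> 'm \<Rightarrow> nat \<Rightarrow> bool" for S where
  rep0: "rep S 0 0"
| repS: "s \<in> S \<Longrightarrow> rep S x n \<Longrightarrow> rep S (s + x) (Suc n)"

lemma rep_neg:
  fixes S :: "'m::ordered_ab_group_add set"
  assumes "S \<subseteq> {x. x < 0}" "rep S x n"
  shows "x \<le> 0 \<and> (0 < n \<longrightarrow> x < 0)"
  using assms(2)
proof induction
  case rep0 then show ?case by simp
next
  case (repS s x n)
  then have "s < 0" using assms(1) by blast
  then have "s + x < 0" using repS.IH by (intro add_neg_nonpos) auto
  then show ?case by simp
qed

lemma rep_add: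
  fixes S :: "'m::comm_monoid_add set"
  shows "rep S x j \<Longrightarrow> rep S y l \<Longrightarrow> rep S (x + y) (j + l)"
proof (induction rule: rep.induct)
  case rep0 then show ?case by simp
next
  case (repS s x n)
  then have "rep S (s + (x + y)) (Suc (n + l))" by (intro rep.repS) auto
  then show ?case by (simp add: add.assoc)
qed

lemma rep_one: "s \<in> S \<Longrightarrow> rep S s (Suc 0)"
  using rep.repS[OF _ rep.rep0, of s S] by simp

lemma rep_sum:
  fixes S :: "'m::comm_monoid_add set"
  assumes "finite E" "\<And>i. i \<in> E \<Longrightarrow> rep S (a i) (k i)"
  shows "rep S (sum a E) (sum k E)"
  using assms
proof (induction E rule: finite_induct)
  case empty then show ?case by (simp add: rep.rep0)
next
  case (insert i E)
  then show ?case by (simp add: rep_add)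
qed

lemma rep_SucE:
  assumes "rep S x (Suc n)"
  obtains s y where "s \<in> S" "rep S y n" "x = s + y"
  using assms by (cases rule: rep.cases) auto

lemma rep_0E: "rep S x 0 \<Longrightarrow> x = 0"
  by (cases rule: rep.cases) auto

definition lt2 :: "('m::linorder \<times> nat) \<Rightarrow> ('m \<times> nat) \<Rightarrow> bool" where
  "lt2 p q \<longleftrightarrow> fst p < fst q \<or> (fst p = fst q \<and> snd p < snd q)"

lemma lt2_shift:
  fixes x1 x2 s1 s2 :: "'m::linordered_ab_group_add"
  assumes "lt2 (x1, n1) (x2, n2)" "s2 \<le> s1" "0 < n1" "0 < n2"
  shows "lt2 (x1 - s1, n1 - 1) (x2 - s2, n2 - 1)"
proof (cases "x1 < x2")
  case True
  have "x1 - s1 \<le> x1 - s2" using assms(2) by simp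
  also have "\<dots> < x2 - s2" using True by simp
  finally show ?thesis by (simp add: lt2_def)
next
  case False
  then have "x1 = x2" "n1 < n2" using assms(1) by (auto simp: lt2_def)
  then show ?thesis using assms(2-4) by (cases "s1 = s2") (auto simp: lt2_def)
qed

lemma lt2_pre:
  fixes x1 x2 s :: "'m::linordered_ab_group_add"
  assumes "lt2 (x1, n1) (x2, n2)" "s < 0"
  shows "lt2 (x1, n1) (x2 - s, n')"
proof -
  have "x1 \<le> x2" using assms(1) by (auto simp: lt2_def)
  also have "x2 < x2 - s" using assms(2) by simp
  finally show ?thesis by (simp add: lt2_def)
qed

theorem neumann:
  fixes S :: "'m::linordered_ab_group_add set"
  assumes neg: "S \<subseteq> {x. x < 0}" and wb: "well_based S"
  shows "\<not> (\<exists>g::nat \<Rightarrow> 'm \<times> nat. (\<forall>k. rep S (fst (g k)) (snd (g k))) \<and> (\<forall>i j. i < j \<longrightarrow> lt2 (g i) (g j)))"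
proof
  define BAD where "BAD = (\<lambda>h::nat \<Rightarrow> 'm \<times> nat. (\<forall>k. rep S (fst (h k)) (snd (h k))) \<and> (\<forall>i j. i < j \<longrightarrow> lt2 (h i) (h j)))"
  assume "\<exists>g::nat \<Rightarrow> 'm \<times> nat. (\<forall>k. rep S (fst (g k)) (snd (g k))) \<and> (\<forall>i j. i < j \<longrightarrow> lt2 (g i) (g j))"
  then obtain g0 where g0: "BAD g0" unfolding BAD_def by blast
  have "\<exists>g. BAD g \<and> (\<forall>k h. BAD h \<and> (\<forall>i<k. h i = g i) \<longrightarrow> snd (g k) \<le> snd (h k))"
    using g0 unfolding BAD_def by (rule minimal_bad[where Q="\<lambda>p. rep S (fst p) (snd p)" and Rl=lt2 and sz=snd])
  then obtain g where gB: "BAD g" and gmin0: "\<forall>k h. BAD h \<and> (\<forall>i<k. h i = g i) \<longrightarrow> snd (g k) \<le> snd (h k)"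
    by blast
  have gQ: "\<And>k. rep S (fst (g k)) (snd (g k))" using gB unfolding BAD_def by blast
  have gR: "\<And>i j. i < j \<Longrightarrow> lt2 (g i) (g j)" using gB unfolding BAD_def by blast
  have gmin: "\<And>k h. BAD h \<Longrightarrow> (\<forall>i<k. h i = g i) \<Longrightarrow> snd (g k) \<le> snd (h k)"
    using gmin0 by blast
  have npos: "0 < snd (g k)" for k
  proof (rule ccontr)
    assume "\<not> 0 < snd (g k)"
    then have "snd (g k) = 0" by simp
    then have x0: "fst (g k) = 0" using gQ[of k] rep_0E by metis
    have r: "fst (g (Suc k)) \<le> 0 \<and> (0 < snd (g (Suc k)) \<longrightarrow> fst (g (Suc k)) < 0)"
      using rep_neg[OF neg gQ[of "Suc k"]] .
    have "lt2 (g k) (g (Suc k))" using gR by simp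
    then show False using x0 r \<open>snd (g k) = 0\<close> by (auto simp: lt2_def)
  qed
  have "\<forall>k. \<exists>p. fst p \<in> S \<and> rep S (snd p) (snd (g k) - 1) \<and> fst (g k) = fst p + snd p"
  proof
    fix k
    have "rep S (fst (g k)) (Suc (snd (g k) - 1))" using gQ[of k] npos[of k] by simp
    then obtain s y where "s \<in> S" "rep S y (snd (g k) - 1)" "fst (g k) = s + y"
      by (rule rep_SucE)
    then show "\<exists>p. fst p \<in> S \<and> rep S (snd p) (snd (g k) - 1) \<and> fst (g k) = fst p + snd p"
      by (intro exI[of _ "(s, y)"]) simp
  qed
  from choice[OF this] obtain P where P: "\<And>k. fst (P k) \<in> S \<and> rep S (snd (P k)) (snd (g k) - 1) \<and> fst (g k) = fst (P k) + snd (P k)"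
    by blast
  define sf where "sf k = fst (P k)" for k
  define yf where "yf k = snd (P k)" for k
  have sy: "\<And>k. sf k \<in> S" "\<And>k. rep S (yf k) (snd (g k) - 1)" "\<And>k. fst (g k) = sf k + yf k"
    using P by (simp_all add: sf_def yf_def)
  have yf: "yf k = fst (g k) - sf k" for k using sy(3)[of k] by (simp add: algebra_simps)
  obtain \<phi> :: "nat \<Rightarrow> nat" where \<phi>: "strict_mono \<phi>" "\<And>i j. i \<le> j \<Longrightarrow> sf (\<phi> j) \<le> sf (\<phi> i)"
    using wb_subseq[OF wb, of sf] sy(1) by blast
  define h where "h k = (if k < \<phi> 0 then g k else (yf (\<phi> (k - \<phi> 0)), snd (g (\<phi> (k - \<phi> 0))) - 1))" for k
  have hQ: "\<forall>k. rep S (fst (h k)) (snd (h k))"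
    using gQ sy(2) by (auto simp: h_def)
  have sneg: "sf k < 0" for k using sy(1)[of k] neg by blast
  have hR: "\<forall>i j. i < j \<longrightarrow> lt2 (h i) (h j)"
  proof (intro allI impI)
    fix i j :: nat assume ij: "i < j"
    consider "j < \<phi> 0" | "i < \<phi> 0" "\<phi> 0 \<le> j" | "\<phi> 0 \<le> i" by linarith
    then show "lt2 (h i) (h j)"
    proof cases
      case 1 then show ?thesis using ij gR by (simp add: h_def)
    next
      case 2
      define l where "l = j - \<phi> 0"
      have "\<phi> 0 \<le> \<phi> l" using \<phi>(1) by (simp add: strict_mono_less_eq)
      then have "i < \<phi> l" using 2 by simp
      then have "lt2 (fst (g i), snd (g i)) (fst (g (\<phi> l)), snd (g (\<phi> l)))" using gR by simp
      then have "lt2 (fst (g i), snd (g i)) (fst (g (\<phi> l)) - sf (\<phi> l), snd (g (\<phi> l)) - 1)"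
        by (rule lt2_pre) (rule sneg)
      then show ?thesis using 2 by (simp add: h_def l_def yf)
    next
      case 3
      define k where "k = i - \<phi> 0"
      define l where "l = j - \<phi> 0"
      have kl: "k < l" using 3 ij by (simp add: k_def l_def)
      then have "\<phi> k < \<phi> l" using \<phi>(1) by (simp add: strict_mono_less)
      then have "lt2 (fst (g (\<phi> k)), snd (g (\<phi> k))) (fst (g (\<phi> l)), snd (g (\<phi> l)))" using gR by simp
      then have "lt2 (fst (g (\<phi> k)) - sf (\<phi> k), snd (g (\<phi> k)) - 1) (fst (g (\<phi> l)) - sf (\<phi> l), snd (g (\<phi> l)) - 1)"
        by (rule lt2_shift) (use kl \<phi>(2) npos in auto)
      then show ?thesis using 3 ij by (simp add: h_def k_def l_def yf)
    qed
  qed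
  have "snd (g (\<phi> 0)) \<le> snd (h (\<phi> 0))"
    by (rule gmin) (use hQ hR in \<open>auto simp: h_def BAD_def\<close>)
  moreover have "snd (h (\<phi> 0)) = snd (g (\<phi> 0)) - 1" by (simp add: h_def)
  ultimately show False using npos[of "\<phi> 0"] by simp
qed

lemma wb_seq_less:
  fixes f :: "nat \<Rightarrow> 'a::order"
  assumes "\<And>n. f n < f (Suc n)" "i < j" shows "f i < f j"
  using lift_Suc_mono_less[of f, OF assms(1) assms(2)] .

lemma wb_rep:
  fixes S :: "'m::linordered_ab_group_add set"
  assumes neg: "S \<subseteq> {x. x < 0}" and wb: "well_based S"
  shows "well_based {x. \<exists>n. rep S x n}"
  unfolding well_based_def
proof
  assume "\<exists>f::nat \<Rightarrow> 'm. (\<forall>n. f n \<in> {x. \<exists>n. rep S x n}) \<and> (\<forall>n. f n < f (Suc n))"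
  then obtain f :: "nat \<Rightarrow> 'm" where f: "\<And>n. \<exists>k. rep S (f n) k" "\<And>n. f n < f (Suc n)" by blast
  have "\<forall>k. \<exists>j. rep S (f k) j" using f(1) by blast
  from choice[OF this] obtain nn where nn: "\<And>k. rep S (f k) (nn k)" by blast
  define g where "g k = (f k, nn k)" for k
  have H: "(\<forall>k. rep S (fst (g k)) (snd (g k))) \<and> (\<forall>i j. i < j \<longrightarrow> lt2 (g i) (g j))"
    using nn wb_seq_less[of f, OF f(2)] by (simp add: g_def lt2_def)
  then have "\<exists>g::nat \<Rightarrow> 'm \<times> nat. (\<forall>k. rep S (fst (g k)) (snd (g k))) \<and> (\<forall>i j. i < j \<longrightarrow> lt2 (g i) (g j))"
    by (intro exI[of _ g]) (rule H)
  with neumann[OF neg wb] show False by (rule notE)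
qed

lemma fin_rep:
  fixes S :: "'m::linordered_ab_group_add set"
  assumes neg: "S \<subseteq> {x. x < 0}" and wb: "well_based S"
  shows "finite {n. rep S m n}"
proof (rule ccontr)
  assume inf: "infinite {n. rep S m n}"
  define g where "g k = (m, enumerate {n. rep S m n} k)" for k
  have H: "(\<forall>k. rep S (fst (g k)) (snd (g k))) \<and> (\<forall>i j. i < j \<longrightarrow> lt2 (g i) (g j))"
    using enumerate_in_set[OF inf] enumerate_mono[OF _ inf] by (simp add: g_def lt2_def)
  then have "\<exists>g::nat \<Rightarrow> 'm \<times> nat. (\<forall>k. rep S (fst (g k)) (snd (g k))) \<and> (\<forall>i j. i < j \<longrightarrow> lt2 (g i) (g j))"
    by (intro exI[of _ g]) (rule H)
  with neumann[OF neg wb] show False by (rule notE)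
qed

lemma fin_binary:
  fixes A B :: "'m::linordered_ab_group_add set"
  assumes wA: "well_based A" and wB: "well_based B"
  shows "finite {a \<in> A. m - a \<in> B}"
proof (rule ccontr)
  assume "infinite {a \<in> A. m - a \<in> B}"
  from infinite_countable_subset[OF this] obtain f :: "nat \<Rightarrow> 'm"
    where f: "inj f" "range f \<subseteq> {a \<in> A. m - a \<in> B}" by blast
  have fA: "f k \<in> A" for k using f(2) by blast
  obtain \<phi> :: "nat \<Rightarrow> nat" where \<phi>: "strict_mono \<phi>" "\<And>i j. i \<le> j \<Longrightarrow> f (\<phi> j) \<le> f (\<phi> i)"
    using wb_subseq[OF wA, of f] fA by blast
  have "f (\<phi> (Suc k)) < f (\<phi> k)" for k
  proof -
    have "\<phi> (Suc k) \<noteq> \<phi> k" using strict_monoD[OF \<phi>(1), of k "Suc k"] by simp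
    then have "f (\<phi> (Suc k)) \<noteq> f (\<phi> k)" using f(1) by (meson injD)
    then show ?thesis using \<phi>(2)[of k "Suc k"] by simp
  qed
  then have "m - f (\<phi> k) < m - f (\<phi> (Suc k))" for k by simp
  moreover have "m - f (\<phi> k) \<in> B" for k using f(2) by blast
  ultimately have "\<exists>h::nat \<Rightarrow> 'm. (\<forall>n. h n \<in> B) \<and> (\<forall>n. h n < h (Suc n))"
    by (intro exI[of _ "\<lambda>k. m - f (\<phi> k)"]) simp
  then show False using wB unfolding well_based_def by blast
qed

abbreviation lkp :: "('a \<Rightarrow>\<^sub>0 'b::zero) \<Rightarrow> 'a \<Rightarrow> 'b" where "lkp \<equiv> Poly_Mapping.lookup"
abbreviation kys :: "('a \<Rightarrow>\<^sub>0 'b::zero) \<Rightarrow> 'a set" where "kys \<equiv> Poly_Mapping.keys"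

lemma lookup_mult_grp:
  fixes p q :: "'m::ab_group_add \<Rightarrow>\<^sub>0 'k::comm_semiring_0" and n :: 'm
  assumes "finite K" "kys p \<subseteq> K"
  shows "lkp (p * q) n = (\<Sum>a\<in>K. lkp p a * lkp q (n - a))"
proof -
  have inner: "Sum_any (\<lambda>b::'m. if n = a + b then lkp q b else 0) = lkp q (n - a)" for a :: 'm
  proof -
    have "(\<lambda>b::'m. if n = a + b then lkp q b else 0) = (\<lambda>b. if b = n - a then lkp q b else 0)"
      by (auto simp: fun_eq_iff algebra_simps)
    then show ?thesis by (simp only: Sum_any.delta)
  qed
  have "lkp (p * q) n = Sum_any (\<lambda>a. lkp p a * lkp q (n - a))"
    unfolding lookup_mult when_def inner ..
  also have "\<dots> = (\<Sum>a\<in>K. lkp p a * lkp q (n - a))"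
  proof (rule Sum_any.expand_superset)
    show "{a. lkp p a * lkp q (n - a) \<noteq> 0} \<subseteq> K"
    proof
      fix x assume "x \<in> {a. lkp p a * lkp q (n - a) \<noteq> 0}"
      then have "lkp p x \<noteq> 0" by auto
      then have "x \<in> kys p" by (simp add: in_keys_iff)
      with assms(2) show "x \<in> K" by blast
    qed
  qed (rule assms(1))
  finally show ?thesis .
qed

lemma lookup_Cmult:
  fixes p :: "'m::ab_group_add \<Rightarrow>\<^sub>0 'k::comm_semiring_0" and n :: 'm
  shows "lkp (Poly_Mapping.single 0 c * p) n = c * lkp p n"
proof -
  have "lkp (Poly_Mapping.single 0 c * p) n = (\<Sum>a\<in>{0}. lkp (Poly_Mapping.single 0 c) a * lkp p (n - a))"
    by (rule lookup_mult_grp) auto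
  then show ?thesis by (simp add: lookup_single)
qed

lemma sum_supp_eq:
  assumes "finite A" "finite B" "\<And>a. F a \<noteq> 0 \<Longrightarrow> a \<in> A \<and> a \<in> B"
  shows "sum F A = sum F B"
proof -
  have "sum F A = sum F (A \<inter> B)"
    by (rule sum.mono_neutral_right) (use assms in auto)
  also have "\<dots> = sum F B"
    by (rule sum.mono_neutral_left) (use assms in auto)
  finally show ?thesis .
qed

lemma hsupp_hmul:
  fixes f g :: "'m::ab_group_add \<Rightarrow> 'k::comm_ring_1"
  shows "x \<in> hsupp (hmul f g) \<Longrightarrow> \<exists>a. f a \<noteq> 0 \<and> g (x - a) \<noteq> 0"
  unfolding hsupp_def hmul_def
  by (auto elim: sum.not_neutral_contains_not_neutral)

locale hctx =
  fixes S :: "'m::linordered_ab_group_add set" and m :: 'm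
  assumes S_neg: "S \<subseteq> {x. x < 0}" and S_wb: "well_based S"
begin

definition T :: "'m set" where "T = {x. \<exists>n. rep S x n}"
definition G :: "nat \<Rightarrow> 'm set" where "G k = {x. \<exists>n. k \<le> n \<and> rep S x n}"
definition R :: "'m set" where "R = {x \<in> T. m - x \<in> T}"
definition N :: nat where "N = Max {n. rep S m n}"

lemma T_wb: "well_based T"
  unfolding T_def by (rule wb_rep[OF S_neg S_wb])

lemma R_fin: "finite R"
  unfolding R_def using fin_binary[OF T_wb T_wb] .

lemma G0: "G 0 = T" unfolding G_def T_def by auto

lemma G_T: "G k \<subseteq> T" unfolding G_def T_def by auto

lemma G_mono: "k \<le> l \<Longrightarrow> G l \<subseteq> G k" unfolding G_def using order_trans by blast

lemma G_add: "x \<in> G k \<Longrightarrow> y \<in> G l \<Longrightarrow> x + y \<in> G (k + l)"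
proof -
  assume "x \<in> G k" "y \<in> G l"
  then obtain a b where "k \<le> a" "rep S x a" "l \<le> b" "rep S y b" unfolding G_def by blast
  then have "k + l \<le> a + b" "rep S (x + y) (a + b)" using rep_add by auto
  then show ?thesis unfolding G_def by blast
qed

lemma T_add: "x \<in> T \<Longrightarrow> y \<in> T \<Longrightarrow> x + y \<in> T"
  using G_add[of x 0 y 0] G0 by simp

lemma zero_G0: "0 \<in> G 0" unfolding G_def by (auto intro: rep.rep0)

lemma zero_T: "0 \<in> T" using zero_G0 G0 by simp

lemma S_G1: "s \<in> S \<Longrightarrow> s \<in> G 1" unfolding G_def using rep_one by fastforce

lemma S_T: "s \<in> S \<Longrightarrow> s \<in> T" using S_G1 G_T by blast

lemma R_le_N:
  assumes "x \<in> R" "rep S x j" shows "j \<le> N"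
proof -
  from assms(1) obtain j' where "rep S (m - x) j'" unfolding R_def T_def by blast
  from rep_add[OF assms(2) this] have "rep S m (j + j')" by simp
  then have "j + j' \<le> N" unfolding N_def using fin_rep[OF S_neg S_wb, of m] by (intro Max_ge) auto
  then show ?thesis by simp
qed

lemma R_G: "x \<in> R \<Longrightarrow> x \<in> G k \<Longrightarrow> k \<le> N"
  unfolding G_def using R_le_N by force

lemma R_split:
  assumes "n \<in> R" "a \<in> T" "n - a \<in> T"
  shows "a \<in> R" "n - a \<in> R"
proof -
  have mn: "m - n \<in> T" using assms(1) by (simp add: R_def)
  have e1: "m - a = (m - n) + (n - a)" by simp
  have "(m - n) + (n - a) \<in> T" using T_add[OF mn assms(3)] .
  then have "m - a \<in> T" by (simp only: e1)
  then show "a \<in> R" using assms(2) by (simp add: R_def)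
  have e: "m - (n - a) = (m - n) + a" by (simp add: algebra_simps)
  have "(m - n) + a \<in> T" using T_add[OF mn assms(2)] .
  then have "m - (n - a) \<in> T" by (simp only: e)
  then show "n - a \<in> R" using assms(3) by (simp add: R_def)
qed

lemma m_R: "m \<in> T \<Longrightarrow> m \<in> R" unfolding R_def using zero_T by simp

lemma R_T: "R \<subseteq> T" unfolding R_def by auto

lemma hmul_R:
  fixes f g :: "'m \<Rightarrow> 'k::comm_ring_1"
  assumes n: "n \<in> R" and f: "hsupp f \<subseteq> T" and g: "hsupp g \<subseteq> T"
  shows "hmul f g n = (\<Sum>a\<in>R. if n - a \<in> R then f a * g (n - a) else 0)"
proof -
  define A where "A = {a. f a \<noteq> 0 \<and> g (n - a) \<noteq> 0}"
  have AR: "a \<in> R \<and> n - a \<in> R" if "a \<in> A" for a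
  proof -
    have "a \<in> T" "n - a \<in> T" using that f g unfolding A_def hsupp_def by auto
    then show ?thesis using R_split[OF n] by blast
  qed
  have finA: "finite A" using AR R_fin by (metis finite_subset subsetI)
  have "hmul f g n = (\<Sum>a\<in>A. f a * g (n - a))" unfolding hmul_def A_def by simp
  also have "\<dots> = (\<Sum>a\<in>A. if n - a \<in> R then f a * g (n - a) else 0)"
    using AR by (intro sum.cong) auto
  also have "\<dots> = (\<Sum>a\<in>R. if n - a \<in> R then f a * g (n - a) else 0)"
  proof (rule sum_supp_eq[OF finA R_fin])
    fix a assume "(if n - a \<in> R then f a * g (n - a) else 0) \<noteq> 0"
    then have "a \<in> A" unfolding A_def by (auto split: if_splits)
    then show "a \<in> A \<and> a \<in> R" using AR by blast
  qed
  finally show ?thesis .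
qed

lemma lkp_mult_R:
  fixes p q :: "'m \<Rightarrow>\<^sub>0 'k::comm_ring_1"
  assumes n: "n \<in> R" and p: "kys p \<subseteq> T" and q: "kys q \<subseteq> T"
  shows "lkp (p * q) n = (\<Sum>a\<in>R. if n - a \<in> R then lkp p a * lkp q (n - a) else 0)"
proof -
  have "hsupp (lkp p) \<subseteq> T" "hsupp (lkp q) \<subseteq> T"
    using p q by (auto simp: hsupp_def in_keys_iff)
  from hmul_R[OF n this] have h: "hmul (lkp p) (lkp q) n = (\<Sum>a\<in>R. if n - a \<in> R then lkp p a * lkp q (n - a) else 0)" .
  have "lkp (p * q) n = (\<Sum>a\<in>kys p. lkp p a * lkp q (n - a))"
    by (rule lookup_mult_grp) auto
  also have "\<dots> = (\<Sum>a\<in>{a. lkp p a \<noteq> 0 \<and> lkp q (n - a) \<noteq> 0}. lkp p a * lkp q (n - a))"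
  proof (rule sum_supp_eq)
    show "finite {a. lkp p a \<noteq> 0 \<and> lkp q (n - a) \<noteq> 0}"
      by (rule finite_subset[of _ "kys p"]) (auto simp: in_keys_iff)
  qed (auto simp: in_keys_iff)
  also have "\<dots> = hmul (lkp p) (lkp q) n" unfolding hmul_def by simp
  finally show ?thesis using h by simp
qed

definition agr :: "('m \<Rightarrow> 'k::zero) \<Rightarrow> ('m \<Rightarrow>\<^sub>0 'k) \<Rightarrow> bool" where
  "agr f p \<longleftrightarrow> (\<forall>n\<in>R. f n = lkp p n)"

definition pag :: "('m \<Rightarrow>\<^sub>0 'k::zero) \<Rightarrow> ('m \<Rightarrow>\<^sub>0 'k) \<Rightarrow> bool" where
  "pag p q \<longleftrightarrow> (\<forall>n\<in>R. lkp p n = lkp q n)"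

lemma pag_refl [simp]: "pag p p" by (simp add: pag_def)
lemma pag_sym: "pag p q \<Longrightarrow> pag q p" by (simp add: pag_def)
lemma pag_trans: "pag p q \<Longrightarrow> pag q r \<Longrightarrow> pag p r" by (simp add: pag_def)
lemma agr_pag: "agr f p \<Longrightarrow> pag p q \<Longrightarrow> agr f q" by (simp add: agr_def pag_def)

lemma agr_mul:
  fixes f g :: "'m \<Rightarrow> 'k::comm_ring_1"
  assumes "hsupp f \<subseteq> T" "hsupp g \<subseteq> T" "kys p \<subseteq> T" "kys q \<subseteq> T" "agr f p" "agr g q"
  shows "agr (hmul f g) (p * q)"
  unfolding agr_def
proof
  fix n assume n: "n \<in> R"
  show "hmul f g n = lkp (p * q) n"
    using assms(5,6) unfolding hmul_R[OF n assms(1,2)] lkp_mult_R[OF n assms(3,4)] agr_def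
    by (intro sum.cong) auto
qed

lemma pag_mul:
  fixes p q p' q' :: "'m \<Rightarrow>\<^sub>0 'k::comm_ring_1"
  assumes "kys p \<subseteq> T" "kys q \<subseteq> T" "kys p' \<subseteq> T" "kys q' \<subseteq> T" "pag p p'" "pag q q'"
  shows "pag (p * q) (p' * q')"
  unfolding pag_def
proof
  fix n assume n: "n \<in> R"
  show "lkp (p * q) n = lkp (p' * q') n"
    using assms(5,6) unfolding lkp_mult_R[OF n assms(1,2)] lkp_mult_R[OF n assms(3,4)] pag_def
    by (intro sum.cong) auto
qed

lemma pag_add: "pag p p' \<Longrightarrow> pag q q' \<Longrightarrow> pag (p + q) (p' + q')"
  by (simp add: pag_def lookup_add)

lemma pag_sum: "(\<And>i. i \<in> A \<Longrightarrow> pag (F i) (F' i)) \<Longrightarrow> pag (sum F A) (sum F' A)"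
  by (simp add: pag_def lookup_sum)

lemma pag_Cmult:
  fixes p q :: "'m \<Rightarrow>\<^sub>0 'k::comm_ring_1"
  shows "pag p q \<Longrightarrow> pag (Poly_Mapping.single 0 c * p) (Poly_Mapping.single 0 c * q)"
  by (simp add: pag_def lookup_Cmult)

end

context hctx begin

lemma hsupp_hmul_G:
  fixes f g :: "'m \<Rightarrow> 'k::comm_ring_1"
  assumes "hsupp f \<subseteq> G k" "hsupp g \<subseteq> G l"
  shows "hsupp (hmul f g) \<subseteq> G (k + l)"
proof
  fix x assume "x \<in> hsupp (hmul f g)"
  then obtain a where "f a \<noteq> 0" "g (x - a) \<noteq> 0" using hsupp_hmul by blast
  then have "a \<in> G k" "x - a \<in> G l" using assms unfolding hsupp_def by auto
  from G_add[OF this] show "x \<in> G (k + l)" by simp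
qed

lemma hsupp_hone: "hsupp (hone :: 'm \<Rightarrow> 'k::{zero,one}) \<subseteq> G 0"
  using zero_G0 by (auto simp: hsupp_def hone_def split: if_splits)

lemma hsupp_hpow:
  fixes f :: "'m \<Rightarrow> 'k::comm_ring_1"
  assumes "hsupp f \<subseteq> G k"
  shows "hsupp (hpow f j) \<subseteq> G (k * j)"
proof (induction j)
  case 0 then show ?case using hsupp_hone by simp
next
  case (Suc j)
  have "hsupp (hmul f (hpow f j)) \<subseteq> G (k + k * j)" by (rule hsupp_hmul_G[OF assms Suc])
  then show ?case by simp
qed

lemma hsupp_hpow_T:
  fixes f :: "'m \<Rightarrow> 'k::comm_ring_1"
  assumes "hsupp f \<subseteq> T" shows "hsupp (hpow f j) \<subseteq> T"
  using hsupp_hpow[of f 0 j] assms G0 by simp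

lemma kys_mul_G:
  fixes p q :: "'m \<Rightarrow>\<^sub>0 'k::comm_ring_1"
  assumes "kys p \<subseteq> G k" "kys q \<subseteq> G l"
  shows "kys (p * q) \<subseteq> G (k + l)"
proof
  fix x assume "x \<in> kys (p * q)"
  then obtain a b where "x = a + b" "a \<in> kys p" "b \<in> kys q" using keys_mult by blast
  then show "x \<in> G (k + l)" using assms G_add by blast
qed

lemma kys_one: "kys (1 :: 'm \<Rightarrow>\<^sub>0 'k::comm_ring_1) \<subseteq> G 0"
  using zero_G0 by simp

lemma kys_pow:
  fixes p :: "'m \<Rightarrow>\<^sub>0 'k::comm_ring_1"
  assumes "kys p \<subseteq> G k"
  shows "kys (p ^ j) \<subseteq> G (k * j)"
proof (induction j)
  case 0 then show ?case using kys_one by simp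
next
  case (Suc j)
  have "kys (p * p ^ j) \<subseteq> G (k + k * j)" by (rule kys_mul_G[OF assms Suc])
  then show ?case by simp
qed

lemma kys_add_G:
  fixes p q :: "'m \<Rightarrow>\<^sub>0 'k::comm_ring_1"
  shows "kys p \<subseteq> G k \<Longrightarrow> kys q \<subseteq> G k \<Longrightarrow> kys (p + q) \<subseteq> G k"
  using keys_add[of p q] by blast

lemma kys_diff_G:
  fixes p q :: "'m \<Rightarrow>\<^sub>0 'k::comm_ring_1"
  shows "kys p \<subseteq> G k \<Longrightarrow> kys q \<subseteq> G k \<Longrightarrow> kys (p - q) \<subseteq> G k"
  using keys_diff[of p q] by blast

lemma kys_sum_G:
  fixes F :: "'i \<Rightarrow> 'm \<Rightarrow>\<^sub>0 'k::comm_ring_1"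
  shows "(\<And>i. i \<in> A \<Longrightarrow> kys (F i) \<subseteq> G k) \<Longrightarrow> kys (sum F A) \<subseteq> G k"
  using keys_sum[of F A] by blast

lemma kys_Cmult:
  fixes p :: "'m \<Rightarrow>\<^sub>0 'k::comm_ring_1"
  shows "kys (Poly_Mapping.single 0 c * p) \<subseteq> kys p"
  by (auto simp: in_keys_iff lookup_Cmult)

lemma kys_Cmult_G:
  fixes p :: "'m \<Rightarrow>\<^sub>0 'k::comm_ring_1"
  shows "kys p \<subseteq> G k \<Longrightarrow> kys (Poly_Mapping.single 0 c * p) \<subseteq> G k"
  using kys_Cmult by blast

lemma vanish:
  fixes p :: "'m \<Rightarrow>\<^sub>0 'k::comm_ring_1"
  assumes "kys p \<subseteq> G (Suc N)" shows "pag p 0"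
  unfolding pag_def
proof
  fix n assume n: "n \<in> R"
  show "lkp p n = lkp 0 n"
  proof (rule ccontr)
    assume "lkp p n \<noteq> lkp 0 n"
    then have "n \<in> kys p" by (simp add: in_keys_iff)
    then have "n \<in> G (Suc N)" using assms by blast
    then show False using R_G[OF n] by fastforce
  qed
qed

definition tr :: "('m \<Rightarrow> 'k::zero) \<Rightarrow> 'm \<Rightarrow>\<^sub>0 'k" where
  "tr f = Abs_poly_mapping (\<lambda>n. if n \<in> R then f n else 0)"

lemma lkp_tr: "lkp (tr f) n = (if n \<in> R then f n else 0)"
proof -
  have "finite {n. (if n \<in> R then f n else 0) \<noteq> 0}"
    by (rule finite_subset[OF _ R_fin]) (auto split: if_splits)
  then show ?thesis unfolding tr_def by simp
qed

lemma kys_tr: "hsupp f \<subseteq> X \<Longrightarrow> kys (tr f) \<subseteq> X"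
  by (auto simp: in_keys_iff lkp_tr hsupp_def split: if_splits)

lemma agr_tr: "agr f (tr f)" by (simp add: agr_def lkp_tr)

lemma agr_hone: "agr (hone :: 'm \<Rightarrow> 'k::comm_ring_1) 1"
  by (simp add: agr_def hone_def lookup_one when_def)

lemma agr_hpow:
  fixes f :: "'m \<Rightarrow> 'k::comm_ring_1"
  assumes f: "hsupp f \<subseteq> T" and p: "kys p \<subseteq> T" and a: "agr f p"
  shows "agr (hpow f j) (p ^ j)"
proof (induction j)
  case 0 then show ?case using agr_hone by simp
next
  case (Suc j)
  have pj: "kys (p ^ j) \<subseteq> T" using kys_pow[of p 0 j] p G0 by simp
  have "agr (hmul f (hpow f j)) (p * p ^ j)"
    by (rule agr_mul[OF f hsupp_hpow_T[OF f] p pj a Suc])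
  then show ?case by simp
qed

lemma pag_pow:
  fixes p q :: "'m \<Rightarrow>\<^sub>0 'k::comm_ring_1"
  assumes p: "kys p \<subseteq> T" and q: "kys q \<subseteq> T" and a: "pag p q"
  shows "pag (p ^ j) (q ^ j)"
proof (induction j)
  case 0 then show ?case by simp
next
  case (Suc j)
  have pj: "kys (p ^ j) \<subseteq> T" using kys_pow[of p 0 j] p G0 by simp
  have qj: "kys (q ^ j) \<subseteq> T" using kys_pow[of q 0 j] q G0 by simp
  show ?case using pag_mul[OF p pj q qj a Suc] by simp
qed

end

unbundle fps_syntax

abbreviation Cst :: "'k \<Rightarrow> 'm::ab_group_add \<Rightarrow>\<^sub>0 'k::comm_ring_1" where
  "Cst c \<equiv> Poly_Mapping.single 0 c"

lemma Cst_mult: "Cst a * Cst b = (Cst (a * b) :: 'm::ab_group_add \<Rightarrow>\<^sub>0 'k::comm_ring_1)"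
  by (simp add: mult_single)

lemma Cst_sum: "(Cst (\<Sum>i\<in>A. f i) :: 'm::ab_group_add \<Rightarrow>\<^sub>0 'k::comm_ring_1) = (\<Sum>i\<in>A. Cst (f i))"
  by (induction A rule: infinite_finite_induct) (simp_all add: single_add)

context hctx begin

lemma pag_add_zero:
  fixes A B :: "'m \<Rightarrow>\<^sub>0 'k::comm_ring_1"
  shows "pag A 0 \<Longrightarrow> pag (A + B) B"
  by (simp add: pag_def lookup_add)

lemma kys_term_G:
  fixes u v :: "'m \<Rightarrow>\<^sub>0 'k::comm_ring_1"
  assumes "kys u \<subseteq> G 1" "kys v \<subseteq> G 1"
  shows "kys (Cst c * u ^ i * v ^ j) \<subseteq> G (i + j)"
proof -
  have "kys (Cst c * u ^ i) \<subseteq> G i" using kys_Cmult_G[OF kys_pow[OF assms(1), of i]] by simp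
  moreover have "kys (v ^ j) \<subseteq> G j" using kys_pow[OF assms(2), of j] by simp
  ultimately show ?thesis by (rule kys_mul_G)
qed

lemma tri:
  fixes u v :: "'m \<Rightarrow>\<^sub>0 'k::comm_ring_1" and c :: "nat \<Rightarrow> nat \<Rightarrow> 'k"
  assumes u: "kys u \<subseteq> G 1" and v: "kys v \<subseteq> G 1"
  shows "pag (\<Sum>i\<le>N. \<Sum>j\<le>N. Cst (c i j) * u ^ i * v ^ j)
             (\<Sum>k\<le>N. \<Sum>i\<le>k. Cst (c i (k - i)) * u ^ i * v ^ (k - i))"
proof -
  define f where "f i j = Cst (c i j) * u ^ i * v ^ j" for i j
  define D where "D = {(i, j). i + j \<le> N}"
  have r: "(\<Sum>k\<le>N. \<Sum>i\<le>k. f i (k - i)) = (\<Sum>(i,j)\<in>D. f i j)"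
    unfolding D_def by (simp only: sum.triangle_reindex_eq)
  have l: "(\<Sum>i\<le>N. \<Sum>j\<le>N. f i j) = (\<Sum>(i,j)\<in>{..N}\<times>{..N}. f i j)"
    by (simp add: sum.cartesian_product)
  have sub: "D \<subseteq> {..N}\<times>{..N}" unfolding D_def by auto
  have split: "(\<Sum>(i,j)\<in>{..N}\<times>{..N}. f i j) = (\<Sum>(i,j)\<in>{..N}\<times>{..N} - D. f i j) + (\<Sum>(i,j)\<in>D. f i j)"
    by (rule sum.subset_diff[OF sub]) simp
  have "kys (\<Sum>(i,j)\<in>{..N}\<times>{..N} - D. f i j) \<subseteq> G (Suc N)"
  proof (rule kys_sum_G)
    fix p assume p: "p \<in> {..N}\<times>{..N} - D"
    obtain i j where ij: "p = (i, j)" by fastforce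
    have "Suc N \<le> i + j" using p ij by (auto simp: D_def)
    then have "G (i + j) \<subseteq> G (Suc N)" by (rule G_mono)
    then show "kys (case p of (i, j) \<Rightarrow> f i j) \<subseteq> G (Suc N)"
      using kys_term_G[OF u v, of "c i j" i j] ij by (auto simp: f_def)
  qed
  then have "pag (\<Sum>(i,j)\<in>{..N}\<times>{..N} - D. f i j) 0" by (rule vanish)
  then have "pag (\<Sum>(i,j)\<in>{..N}\<times>{..N}. f i j) (\<Sum>(i,j)\<in>D. f i j)"
    unfolding split by (rule pag_add_zero)
  then show ?thesis unfolding f_def[symmetric] l r .
qed

definition evN :: "'k fps \<Rightarrow> ('m \<Rightarrow>\<^sub>0 'k) \<Rightarrow> ('m \<Rightarrow>\<^sub>0 'k::comm_ring_1)" where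
  "evN F x = (\<Sum>k\<le>N. Cst (F $ k) * x ^ k)"

lemma kys_evN_G0:
  fixes x :: "'m \<Rightarrow>\<^sub>0 'k::comm_ring_1"
  assumes "kys x \<subseteq> T" shows "kys (evN F x) \<subseteq> T"
proof -
  have "kys (evN F x) \<subseteq> G 0"
    unfolding evN_def
    by (rule kys_sum_G, rule kys_Cmult_G) (use kys_pow[of x 0] assms G0 in auto)
  then show ?thesis using G0 by simp
qed

lemma kys_evN_G1:
  fixes x :: "'m \<Rightarrow>\<^sub>0 'k::comm_ring_1"
  assumes "kys x \<subseteq> G 1" "F $ 0 = 0" shows "kys (evN F x) \<subseteq> G 1"
  unfolding evN_def
proof (rule kys_sum_G)
  fix k assume "k \<in> {..N}"
  show "kys (Cst (F $ k) * x ^ k) \<subseteq> G 1"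
  proof (cases k)
    case 0 then show ?thesis using assms(2) by simp
  next
    case (Suc k')
    have "kys (x ^ k) \<subseteq> G k" using kys_pow[OF assms(1), of k] by simp
    also have "\<dots> \<subseteq> G 1" using Suc by (intro G_mono) simp
    finally show ?thesis by (rule kys_Cmult_G)
  qed
qed

lemma evN_mult:
  fixes x :: "'m \<Rightarrow>\<^sub>0 'k::comm_ring_1"
  assumes x: "kys x \<subseteq> G 1"
  shows "pag (evN F x * evN H x) (evN (F * H) x)"
proof -
  have "evN F x * evN H x = (\<Sum>i\<le>N. \<Sum>j\<le>N. Cst (F $ i * H $ j) * x ^ i * x ^ j)"
    unfolding evN_def sum_product
    by (intro sum.cong refl) (simp add: Cst_mult[symmetric] algebra_simps)
  moreover have "evN (F * H) x = (\<Sum>k\<le>N. \<Sum>i\<le>k. Cst (F $ i * H $ (k - i)) * x ^ i * x ^ (k - i))"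
  proof -
    have "Cst ((F * H) $ k) * x ^ k = (\<Sum>i\<le>k. Cst (F $ i * H $ (k - i)) * x ^ i * x ^ (k - i))" for k
    proof -
      have "Cst ((F * H) $ k) * x ^ k = (\<Sum>i\<le>k. Cst (F $ i * H $ (k - i))) * x ^ k"
        by (simp add: fps_mult_nth atLeast0AtMost Cst_sum)
      also have "\<dots> = (\<Sum>i\<le>k. Cst (F $ i * H $ (k - i)) * x ^ k)" by (simp add: sum_distrib_right)
      also have "\<dots> = (\<Sum>i\<le>k. Cst (F $ i * H $ (k - i)) * x ^ i * x ^ (k - i))"
        by (intro sum.cong refl) (simp add: power_add[symmetric] mult.assoc)
      finally show ?thesis .
    qed
    then show ?thesis unfolding evN_def by simp
  qed
  ultimately show ?thesis using tri[OF x x, of "\<lambda>i j. F $ i * H $ j"] by simp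
qed

end

unbundle fps_syntax

lemma fps_exp_ln: "fps_exp (1::'k::field_char_0) oo fps_ln 1 = 1 + fps_X"
proof -
  have a0: "(fps_exp (1::'k) - 1) $ 0 = 0" by simp
  have a1: "(fps_exp (1::'k) - 1) $ 1 \<noteq> 0" by simp
  have "(fps_exp (1::'k) - 1) oo fps_ln 1 = fps_X"
    using fps_inv_right[OF a0 a1] fps_ln_fps_exp_inv[of "1::'k"] by simp
  then have "(fps_exp (1::'k) oo fps_ln 1) - 1 = fps_X"
    by (simp add: fps_compose_sub_distrib)
  then show ?thesis by (simp add: algebra_simps)
qed

context hctx begin

declare pag_trans [trans]

lemma evN_one: "evN 1 x = (1 :: 'm \<Rightarrow>\<^sub>0 'k::comm_ring_1)"
proof -
  have "evN 1 x = (\<Sum>k\<in>{0}. Cst ((1::'k fps) $ k) * x ^ k)"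
    unfolding evN_def by (rule sum.mono_neutral_right) auto
  then show ?thesis by simp
qed

lemma evN_pow:
  fixes x :: "'m \<Rightarrow>\<^sub>0 'k::comm_ring_1"
  assumes x: "kys x \<subseteq> G 1"
  shows "pag (evN (F ^ j) x) ((evN F x) ^ j)"
proof (induction j)
  case 0 then show ?case by (simp add: evN_one)
next
  case (Suc j)
  have xT: "kys x \<subseteq> T" using x G_T by blast
  have "pag (evN (F * F ^ j) x) (evN F x * evN (F ^ j) x)"
    by (rule pag_sym, rule evN_mult[OF x])
  also have "pag (evN F x * evN (F ^ j) x) (evN F x * (evN F x) ^ j)"
  proof (rule pag_mul)
    have "kys (evN F x) \<subseteq> G 0" using kys_evN_G0[OF xT] G0 by simp
    from kys_pow[OF this, of j] show "kys ((evN F x) ^ j) \<subseteq> T" using G0 by simp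
  qed (use kys_evN_G0[OF xT] Suc in auto)
  finally show ?case by simp
qed


lemma evN_compose:
  fixes x :: "'m \<Rightarrow>\<^sub>0 'k::comm_ring_1"
  assumes x: "kys x \<subseteq> G 1" and H0: "H $ 0 = 0"
  shows "pag (evN (F oo H) x) (evN F (evN H x))"
proof -
  have xT: "kys x \<subseteq> T" using x G_T by blast
  have "evN (F oo H) x = (\<Sum>k\<le>N. \<Sum>n\<le>N. Cst (F $ n * (H ^ n) $ k) * x ^ k)"
    unfolding evN_def
  proof (intro sum.cong refl)
    fix k assume k: "k \<in> {..N}"
    have "Cst ((F oo H) $ k) * x ^ k = (\<Sum>n\<le>k. Cst (F $ n * (H ^ n) $ k) * x ^ k)"
      by (simp add: fps_compose_nth atLeast0AtMost Cst_sum sum_distrib_right)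
    also have "\<dots> = (\<Sum>n\<le>N. Cst (F $ n * (H ^ n) $ k) * x ^ k)"
    proof (rule sum.mono_neutral_left)
      show "\<forall>i\<in>{..N} - {..k}. Cst (F $ i * (H ^ i) $ k) * x ^ k = 0"
        using startsby_zero_power_prefix[OF H0] by auto
    qed (use k in auto)
    finally show "Cst ((F oo H) $ k) * x ^ k = (\<Sum>n\<le>N. Cst (F $ n * (H ^ n) $ k) * x ^ k)" .
  qed
  also have "\<dots> = (\<Sum>n\<le>N. Cst (F $ n) * evN (H ^ n) x)"
    unfolding evN_def sum_distrib_left
    by (subst sum.swap) (simp add: Cst_mult[symmetric] mult.assoc)
  finally have eq: "evN (F oo H) x = (\<Sum>n\<le>N. Cst (F $ n) * evN (H ^ n) x)" .
  have "pag (\<Sum>n\<le>N. Cst (F $ n) * evN (H ^ n) x) (\<Sum>n\<le>N. Cst (F $ n) * (evN H x) ^ n)"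
    by (intro pag_sum pag_Cmult evN_pow[OF x])
  then show ?thesis unfolding eq by (simp add: evN_def)
qed

lemma exp_add:
  fixes x y :: "'m \<Rightarrow>\<^sub>0 'k::field_char_0"
  assumes x: "kys x \<subseteq> G 1" and y: "kys y \<subseteq> G 1"
  shows "pag (evN (fps_exp 1) (x + y)) (evN (fps_exp 1) x * evN (fps_exp 1) y)"
proof -
  define a :: "nat \<Rightarrow> 'k" where "a n = 1 / fact n" for n
  have E: "fps_exp 1 $ n = a n" for n by (simp add: a_def)
  have sc: "a k * of_nat (k choose i) = a i * a (k - i)" if "i \<le> k" for i k
    using that by (simp add: a_def binomial_fact field_simps)
  have l: "evN (fps_exp 1) x * evN (fps_exp 1) y = (\<Sum>i\<le>N. \<Sum>j\<le>N. Cst (a i * a j) * x ^ i * y ^ j)"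
    unfolding evN_def sum_product E
    by (intro sum.cong refl) (simp add: Cst_mult[symmetric] algebra_simps)
  have r: "evN (fps_exp 1) (x + y) = (\<Sum>k\<le>N. \<Sum>i\<le>k. Cst (a i * a (k - i)) * x ^ i * y ^ (k - i))"
    unfolding evN_def E
  proof (intro sum.cong refl)
    fix k
    have "Cst (a k) * (x + y) ^ k = (\<Sum>i\<le>k. Cst (a k) * (of_nat (k choose i) * x ^ i * y ^ (k - i)))"
      by (simp add: binomial_ring sum_distrib_left)
    also have "\<dots> = (\<Sum>i\<le>k. Cst (a i * a (k - i)) * x ^ i * y ^ (k - i))"
    proof (intro sum.cong refl)
      fix i assume "i \<in> {..k}"
      then have "a k * of_nat (k choose i) = a i * a (k - i)" using sc by simp
      then have "Cst (a k) * of_nat (k choose i) = (Cst (a i * a (k - i)) :: 'm \<Rightarrow>\<^sub>0 'k)"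
        by (metis Cst_mult single_of_nat)
      then show "Cst (a k) * (of_nat (k choose i) * x ^ i * y ^ (k - i)) = Cst (a i * a (k - i)) * x ^ i * y ^ (k - i)"
        by (simp add: mult.assoc[symmetric])
    qed
    finally show "Cst (a k) * (x + y) ^ k = (\<Sum>i\<le>k. Cst (a i * a (k - i)) * x ^ i * y ^ (k - i))" .
  qed
  show ?thesis unfolding l r by (rule pag_sym, rule tri[OF x y])
qed

lemma exp_ln:
  fixes x :: "'m \<Rightarrow>\<^sub>0 'k::field_char_0"
  assumes x: "kys x \<subseteq> G 1"
  shows "pag (evN (fps_exp 1) (evN (fps_ln 1) x)) (1 + x)"
proof -
  have "pag (evN (fps_exp 1 oo fps_ln 1) x) (evN (fps_exp 1) (evN (fps_ln 1) x))"
    by (rule evN_compose[OF x]) simp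
  then have 1: "pag (evN (fps_exp 1) (evN (fps_ln 1) x)) (evN (1 + fps_X) x)"
    unfolding fps_exp_ln by (rule pag_sym)
  have 2: "pag (evN (1 + fps_X) x) (1 + x)"
  proof (cases N)
    case 0
    have "evN (1 + fps_X) x = 1" unfolding evN_def 0 by simp
    moreover have "pag x 0" using x 0 by (intro vanish) simp
    ultimately show ?thesis by (simp add: pag_def lookup_add)
  next
    case (Suc N')
    have "evN (1 + fps_X) x = (\<Sum>k\<in>{0, 1}. Cst ((1 + fps_X) $ k) * x ^ k)"
      unfolding evN_def by (rule sum.mono_neutral_right) (auto simp: Suc)
    then show ?thesis by simp
  qed
  from pag_trans[OF 1 2] show ?thesis .
qed

lemma kys_prod_G0:
  fixes f :: "'i \<Rightarrow> 'm \<Rightarrow>\<^sub>0 'k::comm_ring_1"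
  shows "(\<And>i. i \<in> J \<Longrightarrow> kys (f i) \<subseteq> G 0) \<Longrightarrow> kys (\<Prod>i\<in>J. f i) \<subseteq> G 0"
proof (induction J rule: infinite_finite_induct)
  case (infinite J) then show ?case using kys_one by simp
next
  case empty then show ?case using kys_one by simp
next
  case (insert j J)
  have "kys (f j * (\<Prod>i\<in>J. f i)) \<subseteq> G (0 + 0)"
    by (rule kys_mul_G) (use insert in auto)
  then show ?case using insert by simp
qed

lemma exp_sum_ln:
  fixes e :: "'i \<Rightarrow> 'm \<Rightarrow>\<^sub>0 'k::field_char_0"
  assumes "finite J" "\<And>i. i \<in> J \<Longrightarrow> kys (e i) \<subseteq> G 1"
  shows "pag (evN (fps_exp 1) (\<Sum>i\<in>J. evN (fps_ln 1) (e i))) (\<Prod>i\<in>J. 1 + e i)"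
  using assms
proof (induction J rule: finite_induct)
  case empty
  have "evN (fps_exp 1) 0 = (\<Sum>k\<in>{0}. Cst ((fps_exp (1::'k)) $ k) * (0::'m \<Rightarrow>\<^sub>0 'k) ^ k)"
    unfolding evN_def by (rule sum.mono_neutral_right) auto
  then show ?case by simp
next
  case (insert i J)
  have ei: "kys (e i) \<subseteq> G 1" using insert by simp
  have li: "kys (evN (fps_ln 1) (e i)) \<subseteq> G 1" by (rule kys_evN_G1[OF ei]) simp
  have lJ: "kys (\<Sum>i\<in>J. evN (fps_ln 1) (e i)) \<subseteq> G 1"
    by (rule kys_sum_G, rule kys_evN_G1) (use insert in auto)
  have T1: "kys p \<subseteq> G 1 \<Longrightarrow> kys p \<subseteq> T" for p :: "'m \<Rightarrow>\<^sub>0 'k" using G_T by blast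
  have "evN (fps_exp 1) (\<Sum>i\<in>insert i J. evN (fps_ln 1) (e i))
        = evN (fps_exp 1) (evN (fps_ln 1) (e i) + (\<Sum>i\<in>J. evN (fps_ln 1) (e i)))"
    using insert by simp
  also have "pag \<dots> (evN (fps_exp 1) (evN (fps_ln 1) (e i)) * evN (fps_exp 1) (\<Sum>i\<in>J. evN (fps_ln 1) (e i)))"
    by (rule exp_add[OF li lJ])
  also have "pag \<dots> ((1 + e i) * (\<Prod>i\<in>J. 1 + e i))"
  proof (rule pag_mul)
    show "kys (evN (fps_exp 1) (evN (fps_ln 1) (e i))) \<subseteq> T" by (rule kys_evN_G0, rule T1, rule li)
    show "kys (evN (fps_exp 1) (\<Sum>i\<in>J. evN (fps_ln 1) (e i))) \<subseteq> T" by (rule kys_evN_G0, rule T1, rule lJ)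
    show "kys (1 + e i) \<subseteq> T" using kys_add_G[OF kys_one, of "e i"] ei G_mono[of 0 1] G0 by auto
    have "kys (\<Prod>i\<in>J. 1 + e i) \<subseteq> G 0"
    proof (rule kys_prod_G0)
      fix j assume "j \<in> J"
      then have "kys (e j) \<subseteq> G 0" using insert(4)[of j] G_mono[of 0 1] by auto
      then show "kys (1 + e j) \<subseteq> G 0" using kys_add_G[OF kys_one] by blast
    qed
    then show "kys (\<Prod>i\<in>J. 1 + e i) \<subseteq> T" using G0 by simp
    show "pag (evN (fps_exp 1) (evN (fps_ln 1) (e i))) (1 + e i)" by (rule exp_ln[OF ei])
    show "pag (evN (fps_exp 1) (\<Sum>i\<in>J. evN (fps_ln 1) (e i))) (\<Prod>i\<in>J. 1 + e i)"
      using insert by simp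
  qed
  finally show ?case using insert by simp
qed

end

lemma lkp_prod:
  fixes p :: "'i \<Rightarrow> 'm::ab_group_add \<Rightarrow>\<^sub>0 'k::comm_ring_1" and n :: 'm
  assumes "finite E" "finite K" "\<And>i. i \<in> E \<Longrightarrow> kys (p i) \<subseteq> K"
  shows "lkp (\<Prod>i\<in>E. p i) n = (\<Sum>a\<in>{a \<in> E \<rightarrow>\<^sub>E K. (\<Sum>i\<in>E. a i) = n}. \<Prod>i\<in>E. lkp (p i) (a i))"
  using assms(1,3)
proof (induction E arbitrary: n rule: finite_induct)
  case empty
  have "{a \<in> {} \<rightarrow>\<^sub>E K. (\<Sum>i\<in>{}. a i) = n} = (if n = 0 then {\<lambda>_. undefined} else {})"
    by auto
  then show ?case by (simp add: lookup_one when_def)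
next
  case (insert i E)
  define A where "A b = {a \<in> E \<rightarrow>\<^sub>E K. (\<Sum>j\<in>E. a j) = n - b}" for b
  have finA: "finite (A b)" for b
    unfolding A_def by (rule finite_subset[OF _ finite_PiE[OF insert(1) assms(2)]]) auto
  have "lkp (\<Prod>j\<in>insert i E. p j) n = lkp (p i * (\<Prod>j\<in>E. p j)) n"
    using insert by simp
  also have "\<dots> = (\<Sum>b\<in>K. lkp (p i) b * lkp (\<Prod>j\<in>E. p j) (n - b))"
    by (rule lookup_mult_grp[OF assms(2)]) (use insert in auto)
  also have "\<dots> = (\<Sum>b\<in>K. \<Sum>a\<in>A b. lkp (p i) b * (\<Prod>j\<in>E. lkp (p j) (a j)))"
    using insert by (simp add: A_def sum_distrib_left)
  also have "\<dots> = (\<Sum>(b, a)\<in>Sigma K A. lkp (p i) b * (\<Prod>j\<in>E. lkp (p j) (a j)))"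
    by (rule sum.Sigma[OF assms(2)]) (simp add: finA)
  also have "\<dots> = (\<Sum>a\<in>{a \<in> insert i E \<rightarrow>\<^sub>E K. (\<Sum>j\<in>insert i E. a j) = n}. \<Prod>j\<in>insert i E. lkp (p j) (a j))"
  proof (rule sum.reindex_bij_witness[where j = "\<lambda>(b, a). a(i := b)" and i = "\<lambda>a. (a i, a(i := undefined))"])
    fix ba assume ba: "ba \<in> Sigma K A"
    obtain b a where ba': "ba = (b, a)" by fastforce
    have a: "a \<in> E \<rightarrow>\<^sub>E K" "(\<Sum>j\<in>E. a j) = n - b" "b \<in> K" using ba ba' by (auto simp: A_def)
    have ai: "a i = undefined" using a(1) insert(2) by (auto simp: PiE_def extensional_def)
    have sE: "(\<Sum>j\<in>E. (a(i := b)) j) = (\<Sum>j\<in>E. a j)"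
      using insert(2) by (intro sum.cong) auto
    show "(case (case ba of (b, a) \<Rightarrow> a(i := b)) of a \<Rightarrow> (a i, a(i := undefined))) = ba"
      using ai ba' by auto
    show "(case ba of (b, a) \<Rightarrow> a(i := b)) \<in> {a \<in> insert i E \<rightarrow>\<^sub>E K. (\<Sum>j\<in>insert i E. a j) = n}"
      using a insert(1,2) sE ba' by (auto simp: PiE_def extensional_def Pi_def)
    have pE: "(\<Prod>j\<in>E. lkp (p j) ((a(i := b)) j)) = (\<Prod>j\<in>E. lkp (p j) (a j))"
      using insert(2) by (intro prod.cong) auto
    show "(\<Prod>j\<in>insert i E. lkp (p j) ((case ba of (b, a) \<Rightarrow> a(i := b)) j)) =
          (case ba of (b, a) \<Rightarrow> lkp (p i) b * (\<Prod>j\<in>E. lkp (p j) (a j)))"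
      using insert(1,2) pE ba' by simp
  next
    fix a assume a: "a \<in> {a \<in> insert i E \<rightarrow>\<^sub>E K. (\<Sum>j\<in>insert i E. a j) = n}"
    show "(case (a i, a(i := undefined)) of (b, a) \<Rightarrow> a(i := b)) = a" by simp
    have sE: "(\<Sum>j\<in>E. (a(i := undefined)) j) = (\<Sum>j\<in>E. a j)"
      using insert(2) by (intro sum.cong) auto
    have "(\<Sum>j\<in>insert i E. a j) = a i + (\<Sum>j\<in>E. a j)" using insert(1,2) by simp
    then have "(\<Sum>j\<in>E. a j) = n - a i" using a by (simp add: algebra_simps)
    then show "(a i, a(i := undefined)) \<in> Sigma K A"
      using a sE insert(2) by (auto simp: A_def PiE_def extensional_def Pi_def)
  qed
  finally show ?case .
qed

unbundle fps_syntax

lemma hsum_nz: "hsum F K n \<noteq> 0 \<Longrightarrow> \<exists>k\<in>K. F k n \<noteq> 0"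
  unfolding hsum_def by (auto elim: sum.not_neutral_contains_not_neutral)

context hctx begin

lemma T_sum: "finite A \<Longrightarrow> (\<And>j. j \<in> A \<Longrightarrow> f j \<in> T) \<Longrightarrow> sum f A \<in> T"
  by (induction A rule: finite_induct) (auto intro: T_add zero_T)

lemma hsum_pow_R:
  fixes h :: "'m \<Rightarrow> 'k::field_char_0" and c :: "nat \<Rightarrow> 'k"
  assumes n: "n \<in> R" and h: "hsupp h \<subseteq> G 1"
  shows "hsum (\<lambda>k. hscale (c k) (hpow h k)) K n = (\<Sum>k\<in>K \<inter> {..N}. c k * hpow h k n)"
proof -
  have sub: "{k \<in> K. hscale (c k) (hpow h k) n \<noteq> 0} \<subseteq> K \<inter> {..N}"
  proof
    fix k assume "k \<in> {k \<in> K. hscale (c k) (hpow h k) n \<noteq> 0}"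
    then have k: "k \<in> K" "hpow h k n \<noteq> 0" by (auto simp: hscale_def)
    then have "n \<in> G (1 * k)" using hsupp_hpow[OF h, of k] by (auto simp: hsupp_def)
    then have "k \<le> N" using R_G[OF n] by simp
    then show "k \<in> K \<inter> {..N}" using k by simp
  qed
  have "hsum (\<lambda>k. hscale (c k) (hpow h k)) K n = (\<Sum>k\<in>{k \<in> K. hscale (c k) (hpow h k) n \<noteq> 0}. c k * hpow h k n)"
    by (simp add: hsum_def hscale_def)
  also have "\<dots> = (\<Sum>k\<in>K \<inter> {..N}. c k * hpow h k n)"
    by (rule sum.mono_neutral_left) (use sub in \<open>auto simp: hscale_def\<close>)
  finally show ?thesis .
qed

lemma lkp_evN:
  fixes p :: "'m \<Rightarrow>\<^sub>0 'k::comm_ring_1"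
  shows "lkp (evN F p) n = (\<Sum>k\<le>N. F $ k * lkp (p ^ k) n)"
  by (simp add: evN_def lookup_sum lookup_Cmult)

lemma hexp_R:
  fixes h :: "'m \<Rightarrow> 'k::field_char_0"
  assumes n: "n \<in> R" and h: "hsupp h \<subseteq> G 1" and p: "kys p \<subseteq> G 1" and a: "agr h p"
  shows "hexp h n = lkp (evN (fps_exp 1) p) n"
proof -
  have hT: "hsupp h \<subseteq> T" and pT: "kys p \<subseteq> T" using h p G_T by blast+
  have "hexp h n = (\<Sum>k\<in>UNIV \<inter> {..N}. 1 / fact k * hpow h k n)"
    unfolding hexp_def by (rule hsum_pow_R[OF n h])
  also have "\<dots> = (\<Sum>k\<le>N. fps_exp 1 $ k * lkp (p ^ k) n)"
    using agr_hpow[OF hT pT a] n by (intro sum.cong) (auto simp: agr_def)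
  finally show ?thesis by (simp add: lkp_evN)
qed

lemma hlog_R:
  fixes h :: "'m \<Rightarrow> 'k::field_char_0"
  assumes n: "n \<in> R" and h: "hsupp h \<subseteq> G 1" and p: "kys p \<subseteq> G 1" and a: "agr h p"
  shows "hlog1p h n = lkp (evN (fps_ln 1) p) n"
proof -
  have hT: "hsupp h \<subseteq> T" and pT: "kys p \<subseteq> T" using h p G_T by blast+
  have "hlog1p h n = (\<Sum>k\<in>{1..} \<inter> {..N}. (-1) ^ (k - 1) / of_nat k * hpow h k n)"
    unfolding hlog1p_def by (rule hsum_pow_R[OF n h])
  also have "\<dots> = (\<Sum>k\<le>N. fps_ln 1 $ k * lkp (p ^ k) n)"
  proof (rule sum.mono_neutral_cong_left)
    show "\<forall>i\<in>{..N} - {1..} \<inter> {..N}. fps_ln 1 $ i * lkp (p ^ i) n = 0"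
      by (auto simp: fps_ln_nth)
    show "(-1) ^ (x - 1) / of_nat x * hpow h x n = fps_ln 1 $ x * lkp (p ^ x) n" if "x \<in> {1..} \<inter> {..N}" for x
      using that agr_hpow[OF hT pT a, of x] n by (auto simp: agr_def fps_ln_nth)
  qed auto
  finally show ?thesis by (simp add: lkp_evN)
qed

end

locale hctx2 = hctx S m for S :: "'m::linordered_ab_group_add set" and m +
  fixes \<epsilon> :: "'i \<Rightarrow> 'm \<Rightarrow> 'k::field_char_0" and I :: "'i set"
  assumes eps_S: "\<And>i. i \<in> I \<Longrightarrow> hsupp (\<epsilon> i) \<subseteq> S"
    and eps_fin: "\<And>x. finite {i \<in> I. \<epsilon> i x \<noteq> 0}"
begin

definition J :: "'i set" where "J = {i \<in> I. \<exists>s\<in>R. \<epsilon> i s \<noteq> 0}"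

lemma J_fin: "finite J"
proof -
  have "J = (\<Union>s\<in>R. {i \<in> I. \<epsilon> i s \<noteq> 0})" unfolding J_def by auto
  then show ?thesis using R_fin eps_fin by simp
qed

lemma J_I: "J \<subseteq> I" unfolding J_def by auto

lemma eps_G1: "i \<in> I \<Longrightarrow> hsupp (\<epsilon> i) \<subseteq> G 1" using eps_S S_G1 by blast
lemma eps_T: "i \<in> I \<Longrightarrow> hsupp (\<epsilon> i) \<subseteq> T" using eps_G1 G_T by blast

lemma y_supp: "i \<in> I \<Longrightarrow> hsupp (hlog1p (\<epsilon> i)) \<subseteq> G 1"
proof
  fix n assume i: "i \<in> I" and "n \<in> hsupp (hlog1p (\<epsilon> i))"
  then have "hsum (\<lambda>j. hscale ((-1) ^ (j - 1) / of_nat j) (hpow (\<epsilon> i) j)) {1..} n \<noteq> 0"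
    by (simp add: hsupp_def hlog1p_def)
  from hsum_nz[OF this] obtain k where k: "k \<in> {1..}" "hscale ((-1) ^ (k - 1) / of_nat k) (hpow (\<epsilon> i) k) n \<noteq> 0"
    by blast
  then have "n \<in> G (1 * k)" using hsupp_hpow[OF eps_G1[OF i], of k] by (auto simp: hsupp_def hscale_def)
  moreover have "G k \<subseteq> G 1" using k(1) by (intro G_mono) simp
  ultimately show "n \<in> G 1" by auto
qed

lemma y_J:
  assumes i: "i \<in> I" and n: "n \<in> R" and nz: "hlog1p (\<epsilon> i) n \<noteq> 0"
  shows "i \<in> J"
proof -
  have "hsum (\<lambda>j. hscale ((-1) ^ (j - 1) / of_nat j) (hpow (\<epsilon> i) j)) {1..} n \<noteq> 0"
    using nz by (simp add: hlog1p_def)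
  from hsum_nz[OF this] obtain k where k: "k \<in> {1..}" "hscale ((-1) ^ (k - 1) / of_nat k) (hpow (\<epsilon> i) k) n \<noteq> 0"
    by blast
  then obtain k' where k': "k = Suc k'" by (cases k) auto
  have "hmul (\<epsilon> i) (hpow (\<epsilon> i) k') n \<noteq> 0" using k(2) k' by (auto simp: hscale_def)
  then obtain a where a: "\<epsilon> i a \<noteq> 0" "hpow (\<epsilon> i) k' (n - a) \<noteq> 0"
    using hsupp_hmul[of n "\<epsilon> i"] by (auto simp: hsupp_def)
  have "a \<in> T" using a(1) eps_T[OF i] by (auto simp: hsupp_def)
  moreover have "n - a \<in> T" using a(2) hsupp_hpow_T[OF eps_T[OF i], of k'] by (auto simp: hsupp_def)
  ultimately have "a \<in> R" using R_split[OF n] by blast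
  then show ?thesis using a(1) i unfolding J_def by blast
qed

definition L :: "'m \<Rightarrow> 'k" where "L = hsum (\<lambda>i. hlog1p (\<epsilon> i)) I"

lemma L_supp: "hsupp L \<subseteq> G 1"
proof
  fix n assume "n \<in> hsupp L"
  then have "hsum (\<lambda>i. hlog1p (\<epsilon> i)) I n \<noteq> 0" by (simp add: hsupp_def L_def)
  from hsum_nz[OF this] obtain i where "i \<in> I" "hlog1p (\<epsilon> i) n \<noteq> 0"
    by blast
  then show "n \<in> G 1" using y_supp by (auto simp: hsupp_def)
qed

lemma L_R: "n \<in> R \<Longrightarrow> L n = (\<Sum>i\<in>J. hlog1p (\<epsilon> i) n)"
  unfolding L_def hsum_def
  by (rule sum.mono_neutral_left[OF J_fin]) (use y_J J_I in auto)

definition X :: "'m \<Rightarrow>\<^sub>0 'k" where "X = (\<Sum>i\<in>J. evN (fps_ln 1) (tr (\<epsilon> i)))"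

lemma trJ: "i \<in> J \<Longrightarrow> kys (tr (\<epsilon> i)) \<subseteq> G 1"
  using kys_tr[OF eps_G1] J_I by blast

lemma X_G1: "kys X \<subseteq> G 1"
  unfolding X_def by (rule kys_sum_G, rule kys_evN_G1) (use trJ in auto)

lemma agr_L_X: "agr L X"
  unfolding agr_def
proof
  fix n assume n: "n \<in> R"
  have "L n = (\<Sum>i\<in>J. hlog1p (\<epsilon> i) n)" by (rule L_R[OF n])
  also have "\<dots> = (\<Sum>i\<in>J. lkp (evN (fps_ln 1) (tr (\<epsilon> i))) n)"
  proof (rule sum.cong[OF refl])
    fix i assume i: "i \<in> J"
    show "hlog1p (\<epsilon> i) n = lkp (evN (fps_ln 1) (tr (\<epsilon> i))) n"
      by (rule hlog_R[OF n eps_G1 trJ[OF i] agr_tr]) (use i J_I in auto)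
  qed
  finally show "L n = lkp X n" by (simp add: X_def lookup_sum)
qed

end

unbundle fps_syntax

context hctx2 begin

lemma hprod_nz:
  assumes "hprod \<epsilon> E x \<noteq> 0"
  shows "\<exists>a\<in>E \<rightarrow>\<^sub>E UNIV. (\<Sum>i\<in>E. a i) = x \<and> (\<forall>i\<in>E. \<epsilon> i (a i) \<noteq> 0)"
proof -
  from assms have "(\<Sum>a\<in>{a\<in>E \<rightarrow>\<^sub>E UNIV. (\<Sum>i\<in>E. a i) = x \<and> (\<forall>i\<in>E. \<epsilon> i (a i) \<noteq> 0)}. \<Prod>i\<in>E. \<epsilon> i (a i)) \<noteq> 0"
    by (simp add: hprod_def)
  from sum.not_neutral_contains_not_neutral[OF this] show ?thesis by blast
qed

lemma hprod_T:
  assumes "finite E" "E \<subseteq> I" "hprod \<epsilon> E x \<noteq> 0"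
  shows "x \<in> T"
proof -
  obtain a where a: "(\<Sum>i\<in>E. a i) = x" "\<forall>i\<in>E. \<epsilon> i (a i) \<noteq> 0" using hprod_nz[OF assms(3)] by blast
  have "(\<Sum>i\<in>E. a i) \<in> T"
  proof (rule T_sum[OF assms(1)])
    fix j assume "j \<in> E"
    then show "a j \<in> T" using a(2) eps_T assms(2) by (auto simp: hsupp_def)
  qed
  then show ?thesis using a(1) by simp
qed

lemma a_R:
  assumes mR: "m \<in> R" and E: "finite E" "E \<subseteq> I" and a: "(\<Sum>i\<in>E. a i) = m" "\<forall>i\<in>E. \<epsilon> i (a i) \<noteq> 0"
    and i: "i \<in> E"
  shows "a i \<in> R"
proof -
  have aT: "a j \<in> T" if "j \<in> E" for j using that a(2) eps_T E(2) by (auto simp: hsupp_def)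
  have "(\<Sum>j\<in>E. a j) = a i + (\<Sum>j\<in>E - {i}. a j)" using E(1) i by (rule sum.remove)
  then have "m - a i = (\<Sum>j\<in>E - {i}. a j)" using a(1) by (simp add: algebra_simps)
  moreover have "(\<Sum>j\<in>E - {i}. a j) \<in> T" using E(1) aT by (intro T_sum) auto
  ultimately show ?thesis using R_split(1)[OF mR aT[OF i]] by simp
qed

lemma hprod_J:
  assumes mR: "m \<in> R" and E: "finite E" "E \<subseteq> I" and nz: "hprod \<epsilon> E m \<noteq> 0"
  shows "E \<subseteq> J"
proof
  fix i assume i: "i \<in> E"
  obtain a where a: "(\<Sum>i\<in>E. a i) = m" "\<forall>i\<in>E. \<epsilon> i (a i) \<noteq> 0" using hprod_nz[OF nz] by blast
  have "a i \<in> R" by (rule a_R[OF mR E a i])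
  then show "i \<in> J" using a(2) i E(2) unfolding J_def by blast
qed

lemma kys_tr_R: "kys (tr f) \<subseteq> R"
  by (auto simp: in_keys_iff lkp_tr split: if_splits)

lemma hprod_eq:
  assumes mR: "m \<in> R" and E: "finite E" "E \<subseteq> I"
  shows "hprod \<epsilon> E m = lkp (\<Prod>i\<in>E. tr (\<epsilon> i)) m"
proof -
  define B1 where "B1 = {a\<in>E \<rightarrow>\<^sub>E UNIV. (\<Sum>i\<in>E. a i) = m \<and> (\<forall>i\<in>E. \<epsilon> i (a i) \<noteq> 0)}"
  define B2 where "B2 = {a \<in> E \<rightarrow>\<^sub>E R. (\<Sum>i\<in>E. a i) = m}"
  have "lkp (\<Prod>i\<in>E. tr (\<epsilon> i)) m = (\<Sum>a\<in>B2. \<Prod>i\<in>E. lkp (tr (\<epsilon> i)) (a i))"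
    unfolding B2_def by (rule lkp_prod[OF E(1) R_fin kys_tr_R])
  moreover have "hprod \<epsilon> E m = (\<Sum>a\<in>B1. \<Prod>i\<in>E. \<epsilon> i (a i))"
    by (simp add: hprod_def B1_def)
  moreover have "(\<Sum>a\<in>B1. \<Prod>i\<in>E. \<epsilon> i (a i)) = (\<Sum>a\<in>B2. \<Prod>i\<in>E. lkp (tr (\<epsilon> i)) (a i))"
  proof (rule sum.mono_neutral_cong_left)
    show "finite B2" unfolding B2_def
      by (rule finite_subset[OF _ finite_PiE[OF E(1) R_fin]]) auto
    show "B1 \<subseteq> B2"
    proof
      fix a assume "a \<in> B1"
      then have a: "a \<in> E \<rightarrow>\<^sub>E UNIV" "(\<Sum>i\<in>E. a i) = m" "\<forall>i\<in>E. \<epsilon> i (a i) \<noteq> 0" by (auto simp: B1_def)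
      have "\<forall>i\<in>E. a i \<in> R" using a_R[OF mR E a(2,3)] by blast
      then show "a \<in> B2" using a(1,2) by (auto simp: B2_def PiE_def)
    qed
    show "\<forall>a\<in>B2 - B1. (\<Prod>i\<in>E. lkp (tr (\<epsilon> i)) (a i)) = 0"
    proof
      fix a assume "a \<in> B2 - B1"
      then have a: "a \<in> E \<rightarrow>\<^sub>E R" "(\<Sum>i\<in>E. a i) = m" "\<not> (\<forall>i\<in>E. \<epsilon> i (a i) \<noteq> 0)"
        by (auto simp: B1_def B2_def PiE_def)
      then obtain i where i: "i \<in> E" "\<epsilon> i (a i) = 0" by blast
      then have "lkp (tr (\<epsilon> i)) (a i) = 0" by (simp add: lkp_tr)
      then show "(\<Prod>i\<in>E. lkp (tr (\<epsilon> i)) (a i)) = 0" using i(1) E(1) by (metis prod_zero_iff)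
    qed
    fix a assume "a \<in> B1"
    then have "a \<in> E \<rightarrow>\<^sub>E UNIV" "(\<Sum>i\<in>E. a i) = m" "\<forall>i\<in>E. \<epsilon> i (a i) \<noteq> 0" by (auto simp: B1_def)
    then have "\<forall>i\<in>E. a i \<in> R" using a_R[OF mR E] by blast
    then show "(\<Prod>i\<in>E. \<epsilon> i (a i)) = (\<Prod>i\<in>E. lkp (tr (\<epsilon> i)) (a i))"
      by (intro prod.cong) (auto simp: lkp_tr)
  qed
  ultimately show ?thesis by simp
qed

definition FI :: "'i set set" where "FI = {E. finite E \<and> E \<subseteq> I}"

lemma fin_m: "finite {E \<in> FI. hprod \<epsilon> E m \<noteq> 0}"
proof (cases "m \<in> T")
  case True
  then have mR: "m \<in> R" by (rule m_R)
  have "{E \<in> FI. hprod \<epsilon> E m \<noteq> 0} \<subseteq> Pow J" using hprod_J[OF mR] by (auto simp: FI_def)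
  then show ?thesis using J_fin by (simp add: finite_subset)
next
  case False
  then have e: "{E \<in> FI. hprod \<epsilon> E m \<noteq> 0} = {}" using hprod_T by (auto simp: FI_def)
  show ?thesis unfolding e by simp
qed

lemma main_eq: "hexp L m = hsum (hprod \<epsilon>) FI m"
proof (cases "m \<in> T")
  case True
  then have mR: "m \<in> R" by (rule m_R)
  have "hexp L m = lkp (evN (fps_exp 1) X) m"
    by (rule hexp_R[OF mR L_supp X_G1 agr_L_X])
  also have "\<dots> = lkp (\<Prod>i\<in>J. 1 + tr (\<epsilon> i)) m"
  proof -
    have "pag (evN (fps_exp 1) (\<Sum>i\<in>J. evN (fps_ln 1) (tr (\<epsilon> i)))) (\<Prod>i\<in>J. 1 + tr (\<epsilon> i))"
      by (rule exp_sum_ln[OF J_fin]) (rule trJ)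
    then show ?thesis using mR unfolding X_def pag_def by blast
  qed
  also have "\<dots> = (\<Sum>E\<in>Pow J. lkp (\<Prod>i\<in>E. tr (\<epsilon> i)) m)"
  proof -
    have "(\<Prod>i\<in>J. 1 + tr (\<epsilon> i)) = (\<Prod>i\<in>J. tr (\<epsilon> i) + 1)" by (simp add: add.commute)
    also have "\<dots> = (\<Sum>E\<in>Pow J. (\<Prod>i\<in>E. tr (\<epsilon> i)) * (\<Prod>i\<in>J - E. 1))"
      by (rule prod_add[OF J_fin])
    finally show ?thesis by (simp add: lookup_sum)
  qed
  also have "\<dots> = (\<Sum>E\<in>Pow J. hprod \<epsilon> E m)"
  proof (rule sum.cong[OF refl])
    fix E assume "E \<in> Pow J"
    then have "finite E" "E \<subseteq> I" using J_fin J_I finite_subset by auto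
    then show "lkp (\<Prod>i\<in>E. tr (\<epsilon> i)) m = hprod \<epsilon> E m" using hprod_eq[OF mR] by simp
  qed
  also have "\<dots> = hsum (hprod \<epsilon>) FI m"
    unfolding hsum_def
  proof (rule sum.mono_neutral_right)
    show "finite (Pow J)" using J_fin by simp
    show "{E \<in> FI. hprod \<epsilon> E m \<noteq> 0} \<subseteq> Pow J" using hprod_J[OF mR] by (auto simp: FI_def)
    show "\<forall>E\<in>Pow J - {E \<in> FI. hprod \<epsilon> E m \<noteq> 0}. hprod \<epsilon> E m = 0"
    proof
      fix E assume E: "E \<in> Pow J - {E \<in> FI. hprod \<epsilon> E m \<noteq> 0}"
      then have "E \<in> FI" using J_fin J_I finite_subset by (auto simp: FI_def)
      then show "hprod \<epsilon> E m = 0" using E by blast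
    qed
  qed
  finally show ?thesis .
next
  case False
  have LT: "hsupp L \<subseteq> T" using L_supp G_T by blast
  have "hpow L k m = 0" for k using hsupp_hpow_T[OF LT, of k] False by (auto simp: hsupp_def)
  then have "hexp L m = 0" by (simp add: hexp_def hsum_def hscale_def)
  moreover have "hsum (hprod \<epsilon>) FI m = 0"
  proof -
    have e: "{E \<in> FI. hprod \<epsilon> E m \<noteq> 0} = {}" using hprod_T False by (auto simp: FI_def)
    show ?thesis unfolding hsum_def e by simp
  qed
  ultimately show ?thesis by simp
qed

end

theorem lemma2p7:
  fixes \<epsilon> :: "'i \<Rightarrow> 'm::linordered_ab_group_add \<Rightarrow> 'k::field_char_0"
    and I :: "'i set"
  assumes infinitesimal: "\<And>i. i \<in> I \<Longrightarrow> is_hahn_infinitesimal (\<epsilon> i)"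
    and summable: "hsummable \<epsilon> I"
  shows "hsummable (hprod \<epsilon>) {E. finite E \<and> E \<subseteq> I} \<and>
         hexp (hsum (\<lambda>i. hlog1p (\<epsilon> i)) I) = hsum (hprod \<epsilon>) {E. finite E \<and> E \<subseteq> I}"
proof -
  define S where "S = (\<Union>i\<in>I. hsupp (\<epsilon> i))"
  have S_neg: "S \<subseteq> {x. x < 0}"
    using infinitesimal unfolding S_def is_hahn_infinitesimal_def by blast
  have S_wb: "well_based S" using summable unfolding hsummable_def S_def by blast
  have fin: "\<And>x. finite {i \<in> I. \<epsilon> i x \<noteq> 0}" using summable unfolding hsummable_def by blast
  have eS: "\<And>i. i \<in> I \<Longrightarrow> hsupp (\<epsilon> i) \<subseteq> S" unfolding S_def by blast
  have 1: "hsummable (hprod \<epsilon>) {E. finite E \<and> E \<subseteq> I}"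
    unfolding hsummable_def
  proof
    interpret h0: hctx2 S 0 \<epsilon> I by unfold_locales (use S_neg S_wb eS fin in auto)
    have "(\<Union>E\<in>{E. finite E \<and> E \<subseteq> I}. hsupp (hprod \<epsilon> E)) \<subseteq> h0.T"
      using h0.hprod_T by (auto simp: hsupp_def)
    then show "well_based (\<Union>E\<in>{E. finite E \<and> E \<subseteq> I}. hsupp (hprod \<epsilon> E))"
      by (rule wb_subset[OF h0.T_wb])
    show "\<forall>x. finite {E \<in> {E. finite E \<and> E \<subseteq> I}. hprod \<epsilon> E x \<noteq> 0}"
    proof
      fix x
      interpret hx: hctx2 S x \<epsilon> I by unfold_locales (use S_neg S_wb eS fin in auto)
      show "finite {E \<in> {E. finite E \<and> E \<subseteq> I}. hprod \<epsilon> E x \<noteq> 0}"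
        using hx.fin_m unfolding hx.FI_def .
    qed
  qed
  have 2: "hexp (hsum (\<lambda>i. hlog1p (\<epsilon> i)) I) = hsum (hprod \<epsilon>) {E. finite E \<and> E \<subseteq> I}"
  proof
    fix x
    interpret hx: hctx2 S x \<epsilon> I by unfold_locales (use S_neg S_wb eS fin in auto)
    show "hexp (hsum (\<lambda>i. hlog1p (\<epsilon> i)) I) x = hsum (hprod \<epsilon>) {E. finite E \<and> E \<subseteq> I} x"
      using hx.main_eq unfolding hx.L_def hx.FI_def .
  qed
  from 1 2 show ?thesis by blast
qed

end
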